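(* Let $\mathcal H$ be a finite-dimensional Hilbert space, $|\theta\rangle\in\mathcal H$ a pure state, and $n,m,r$ nonnegative integers with $r+m\le n$. If $\varrho_n\in\mathrm{conv}(|\theta\rangle^{[\otimes,n,r]})$, then $\varrho_{n-m}=\mathrm{Tr}_m(\varrho_n)$, the reduced density matrix obtained by tracing out any $m$ of the $n$ systems, belongs to $\mathrm{conv}(|\theta\rangle^{[\otimes,n-m,r]})$.
   Context: For $0\le r\le N$, let $\mathrm{Sym}(\mathcal H^{\otimes N})$ be the symmetric subspace of $\mathcal H^{\otimes N}$, and let $\mathcal V(\mathcal H^{\otimes N},|\theta\rangle^{\otimes N-r})=\{\pi(|\theta\rangle^{\otimes N-r}\otimes|\psi_r\rangle):\pi\in S_N,\ |\psi_r\rangle\in\mathcal H^{\otimes r}\}$, where $S_N$ acts by permuting the $N$ tensor factors. The almost power states along $|\theta\rangle$ are the pure states in $|\theta\rangle^{[\otimes,N,r]}:=\mathrm{Sym}(\mathcal H^{\otimes N})\cap\mathrm{span}(\mathcal V(\mathcal H^{\otimes N},|\theta\rangle^{\otimes N-r}))$, and $\mathrm{conv}(|\theta\rangle^{[\otimes,N,r]})$ denotes the set of mixtures (convex combinations of the projectors) of such states. *)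

theory Defs
  imports Complex_Main "HOL-Combinatorics.Permutations"
begin

text \<open>The finite-dimensional Hilbert space H is C^d with orthonormal
basis indexed by 0..<d. A vector of H^{(tensor N)} is a function on lists of length N
with entries < d (basis tuples), vanishing elsewhere. Operators on H^{(tensor N)}
are kernels (matrices) indexed by pairs of such lists.\<close>

definition tuples :: "nat \<Rightarrow> nat \<Rightarrow> nat list set" where
  "tuples d N = {xs. length xs = N \<and> set xs \<subseteq> {..<d}}"

definition tvec :: "nat \<Rightarrow> nat \<Rightarrow> (nat list \<Rightarrow> complex) \<Rightarrow> bool" where
  "tvec d N \<phi> \<longleftrightarrow> (\<forall>xs. xs \<notin> tuples d N \<longrightarrow> \<phi> xs = 0)"

definition hvec :: "nat \<Rightarrow> (nat \<Rightarrow> complex) \<Rightarrow> bool" where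
  "hvec d \<theta> \<longleftrightarrow> (\<forall>i. i \<ge> d \<longrightarrow> \<theta> i = 0)"

definition hnorm2 :: "nat \<Rightarrow> (nat \<Rightarrow> complex) \<Rightarrow> real" where
  "hnorm2 d \<theta> = (\<Sum>i<d. (cmod (\<theta> i))\<^sup>2)"

definition tnorm2 :: "nat \<Rightarrow> nat \<Rightarrow> (nat list \<Rightarrow> complex) \<Rightarrow> real" where
  "tnorm2 d N \<phi> = (\<Sum>xs\<in>tuples d N. (cmod (\<phi> xs))\<^sup>2)"

definition tpow :: "(nat \<Rightarrow> complex) \<Rightarrow> nat \<Rightarrow> nat list \<Rightarrow> complex" where
  "tpow \<theta> k xs = (if length xs = k then (\<Prod>x\<leftarrow>xs. \<theta> x) else 0)"

definition tprod :: "nat \<Rightarrow> (nat list \<Rightarrow> complex) \<Rightarrow> (nat list \<Rightarrow> complex) \<Rightarrow> nat list \<Rightarrow> complex" where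
  "tprod k \<phi> \<chi> xs = \<phi> (take k xs) * \<chi> (drop k xs)"

definition tperm :: "(nat \<Rightarrow> nat) \<Rightarrow> (nat list \<Rightarrow> complex) \<Rightarrow> nat list \<Rightarrow> complex" where
  "tperm \<pi> \<phi> xs = \<phi> (permute_list \<pi> xs)"

definition sym_space :: "nat \<Rightarrow> nat \<Rightarrow> (nat list \<Rightarrow> complex) set" where
  "sym_space d N = {\<phi>. tvec d N \<phi> \<and> (\<forall>\<pi>. \<pi> permutes {..<N} \<longrightarrow> tperm \<pi> \<phi> = \<phi>)}"

definition cspan :: "(nat list \<Rightarrow> complex) set \<Rightarrow> (nat list \<Rightarrow> complex) set" where
  "cspan S = {\<phi>. \<exists>F c. finite F \<and> F \<subseteq> S \<and> \<phi> = (\<lambda>xs. \<Sum>v\<in>F. c v * v xs)}"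

definition Vset :: "nat \<Rightarrow> nat \<Rightarrow> nat \<Rightarrow> (nat \<Rightarrow> complex) \<Rightarrow> (nat list \<Rightarrow> complex) set" where
  "Vset d N r \<theta> = {tperm \<pi> (tprod (N - r) (tpow \<theta> (N - r)) \<psi>) | \<pi> \<psi>.
      \<pi> permutes {..<N} \<and> tvec d r \<psi>}"

definition almost_power :: "nat \<Rightarrow> nat \<Rightarrow> nat \<Rightarrow> (nat \<Rightarrow> complex) \<Rightarrow> (nat list \<Rightarrow> complex) set" where
  "almost_power d N r \<theta> = sym_space d N \<inter> cspan (Vset d N r \<theta>)"

definition almost_power_states :: "nat \<Rightarrow> nat \<Rightarrow> nat \<Rightarrow> (nat \<Rightarrow> complex) \<Rightarrow> (nat list \<Rightarrow> complex) set" where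
  "almost_power_states d N r \<theta> = {\<phi> \<in> almost_power d N r \<theta>. tnorm2 d N \<phi> = 1}"

definition proj :: "(nat list \<Rightarrow> complex) \<Rightarrow> nat list \<Rightarrow> nat list \<Rightarrow> complex" where
  "proj \<phi> xs ys = \<phi> xs * cnj (\<phi> ys)"

definition conv_almost_power :: "nat \<Rightarrow> nat \<Rightarrow> nat \<Rightarrow> (nat \<Rightarrow> complex) \<Rightarrow> (nat list \<Rightarrow> nat list \<Rightarrow> complex) set" where
  "conv_almost_power d N r \<theta> = {\<rho>. \<exists>F p. finite F \<and> F \<subseteq> almost_power_states d N r \<theta> \<and>
      (\<forall>\<phi>\<in>F. p \<phi> \<ge> (0::real)) \<and> sum p F = 1 \<and>
      \<rho> = (\<lambda>xs ys. \<Sum>\<phi>\<in>F. complex_of_real (p \<phi>) * proj \<phi> xs ys)}"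

text \<open>Reassemble a full n-tuple from the kept entries xs (positions not in T, in
increasing order) and the traced entries zs (positions in T, in increasing order).\<close>
definition merge :: "nat \<Rightarrow> nat set \<Rightarrow> nat list \<Rightarrow> nat list \<Rightarrow> nat list" where
  "merge n T xs zs = map (\<lambda>i. if i \<in> T then zs ! card {j\<in>T. j < i}
                              else xs ! card {j\<in>{..<n} - T. j < i}) [0..<n]"

definition ptrace :: "nat \<Rightarrow> nat \<Rightarrow> nat set \<Rightarrow> (nat list \<Rightarrow> nat list \<Rightarrow> complex) \<Rightarrow> nat list \<Rightarrow> nat list \<Rightarrow> complex" where
  "ptrace d n T \<rho> xs ys =
     (if xs \<in> tuples d (n - card T) \<and> ys \<in> tuples d (n - card T)
      then (\<Sum>zs\<in>tuples d (card T). \<rho> (merge n T xs zs) (merge n T ys zs))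
      else 0)"

end

theory Submission
  imports Defs
begin

lemma cspan_zero: "(\<lambda>xs. 0) \<in> cspan S"
  unfolding cspan_def by (rule CollectI, rule exI[of _ "{}"]) auto

lemma cspan_base: "v \<in> S \<Longrightarrow> v \<in> cspan S"
  unfolding cspan_def by (rule CollectI, rule exI[of _ "{v}"], rule exI[of _ "\<lambda>_. 1"]) auto

lemma cspan_smult: assumes "\<phi> \<in> cspan S" shows "(\<lambda>xs. a * \<phi> xs) \<in> cspan S"
proof -
  from assms obtain F c where F: "finite F" "F \<subseteq> S" "\<phi> = (\<lambda>xs. \<Sum>v\<in>F. c v * v xs)"
    unfolding cspan_def by auto
  show ?thesis unfolding cspan_def
    by (rule CollectI, rule exI[of _ F], rule exI[of _ "\<lambda>v. a * c v"])
       (simp add: F sum_distrib_left mult.assoc)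
qed

lemma cspan_add: assumes "\<phi> \<in> cspan S" "\<psi> \<in> cspan S" shows "(\<lambda>xs. \<phi> xs + \<psi> xs) \<in> cspan S"
proof -
  from assms(1) obtain F1 c1 where F1: "finite F1" "F1 \<subseteq> S" "\<phi> = (\<lambda>xs. \<Sum>v\<in>F1. c1 v * v xs)"
    unfolding cspan_def by auto
  from assms(2) obtain F2 c2 where F2: "finite F2" "F2 \<subseteq> S" "\<psi> = (\<lambda>xs. \<Sum>v\<in>F2. c2 v * v xs)"
    unfolding cspan_def by auto
  define c where "c v = (if v \<in> F1 then c1 v else 0) + (if v \<in> F2 then c2 v else 0)" for v
  have "(\<lambda>xs. \<phi> xs + \<psi> xs) = (\<lambda>xs. \<Sum>v\<in>F1 \<union> F2. c v * v xs)"
  proof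
    fix xs
    have e1: "(\<Sum>v\<in>F1 \<union> F2. (if v \<in> F1 then c1 v else 0) * v xs) = (\<Sum>v\<in>F1. c1 v * v xs)"
      by (rule sum.mono_neutral_cong_right) (use F1 F2 in auto)
    have e2: "(\<Sum>v\<in>F1 \<union> F2. (if v \<in> F2 then c2 v else 0) * v xs) = (\<Sum>v\<in>F2. c2 v * v xs)"
      by (rule sum.mono_neutral_cong_right) (use F1 F2 in auto)
    show "\<phi> xs + \<psi> xs = (\<Sum>v\<in>F1 \<union> F2. c v * v xs)"
      unfolding c_def distrib_right sum.distrib e1 e2 F1(3) F2(3) by simp
  qed
  then show ?thesis unfolding cspan_def using F1 F2 by blast
qed

lemma cspan_sum: assumes "finite I" "\<forall>i\<in>I. f i \<in> cspan S"
  shows "(\<lambda>xs. \<Sum>i\<in>I. a i * f i xs) \<in> cspan S"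
  using assms
proof (induction I rule: finite_induct)
  case empty then show ?case using cspan_zero by simp
next
  case (insert x F)
  then show ?case using cspan_add[OF cspan_smult[of "f x" S "a x"], of "\<lambda>xs. \<Sum>i\<in>F. a i * f i xs"]
    by simp
qed

lemma cspan_mono: assumes "S \<subseteq> cspan S'" "\<phi> \<in> cspan S" shows "\<phi> \<in> cspan S'"
proof -
  from assms(2) obtain F c where F: "finite F" "F \<subseteq> S" "\<phi> = (\<lambda>xs. \<Sum>v\<in>F. c v * v xs)"
    unfolding cspan_def by auto
  show ?thesis unfolding F(3) by (rule cspan_sum) (use F assms(1) in auto)
qed

lemma cspan_restrict:
  assumes "\<forall>u\<in>S. (\<lambda>xs. u (xs @ zs)) \<in> cspan S'" "v \<in> cspan S"
  shows "(\<lambda>xs. v (xs @ zs)) \<in> cspan S'"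
proof -
  from assms(2) obtain F c where F: "finite F" "F \<subseteq> S" "v = (\<lambda>xs. \<Sum>v\<in>F. c v * v xs)"
    unfolding cspan_def by auto
  have "(\<lambda>xs. \<Sum>u\<in>F. c u * (\<lambda>xs. u (xs @ zs)) xs) \<in> cspan S'"
    by (rule cspan_sum) (use F assms(1) in auto)
  then show ?thesis unfolding F(3) by simp
qed

definition dl :: "nat \<Rightarrow> nat \<Rightarrow> complex" where "dl a x = (if x = a then 1 else 0)"

definition prodfun :: "nat \<Rightarrow> (nat \<Rightarrow> nat \<Rightarrow> complex) \<Rightarrow> nat list \<Rightarrow> complex" where
  "prodfun N f l = (if length l = N then \<Prod>i<N. f i (l!i) else 0)"

definition good :: "nat \<Rightarrow> nat \<Rightarrow> nat \<Rightarrow> (nat \<Rightarrow> complex) \<Rightarrow> (nat \<Rightarrow> nat \<Rightarrow> complex) \<Rightarrow> bool" where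
  "good d N r \<theta> f \<longleftrightarrow> (\<forall>i<N. f i = \<theta> \<or> (\<exists>a<d. f i = dl a)) \<and> N - r \<le> card {i. i < N \<and> f i = \<theta>}"

lemma prodfun_append:
  assumes "length zs = m" "m \<le> N"
  shows "prodfun N f (xs @ zs) = (\<Prod>j<m. f (N-m+j) (zs!j)) * prodfun (N-m) f xs"
proof (cases "length xs = N - m")
  case True
  have "(\<Prod>i<N. f i ((xs@zs)!i)) = (\<Prod>i\<in>{0..<N-m}. f i ((xs@zs)!i)) * (\<Prod>i\<in>{N-m..<N}. f i ((xs@zs)!i))"
    using assms by (simp add: lessThan_atLeast0 prod.atLeastLessThan_concat)
  also have "(\<Prod>i\<in>{0..<N-m}. f i ((xs@zs)!i)) = (\<Prod>i<N-m. f i (xs!i))"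
    using True by (simp add: lessThan_atLeast0 nth_append_left)
  also have "(\<Prod>i\<in>{N-m..<N}. f i ((xs@zs)!i)) = (\<Prod>j<m. f (N-m+j) (zs!j))"
    using True assms by (simp add: prod.atLeastLessThan_shift_0[of _ "N-m" N] lessThan_atLeast0 nth_append_right)
  finally show ?thesis using True assms by (simp add: prodfun_def)
next
  case False
  then show ?thesis using assms by (simp add: prodfun_def)
qed

lemma good_restrict:
  assumes "good d N r \<theta> f" "m \<le> N"
  shows "good d (N - m) r \<theta> f"
proof -
  have "{i. i < N \<and> f i = \<theta>} \<subseteq> {i. i < N - m \<and> f i = \<theta>} \<union> {N-m..<N}" by auto
  then have "card {i. i < N \<and> f i = \<theta>} \<le> card ({i. i < N - m \<and> f i = \<theta>} \<union> {N-m..<N})"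
    by (intro card_mono) auto
  also have "\<dots> \<le> card {i. i < N - m \<and> f i = \<theta>} + card {N-m..<N}" by (rule card_Un_le)
  finally have "card {i. i < N \<and> f i = \<theta>} \<le> card {i. i < N - m \<and> f i = \<theta>} + m"
    using assms(2) by simp
  then show ?thesis using assms unfolding good_def by auto
qed

lemma perm_exists:
  assumes "A \<subseteq> {..<N}" "k \<le> card A"
  obtains p where "p permutes {..<N}" "\<forall>i<k. p i \<in> A"
proof -
  have finA: "finite A" using assms(1) finite_subset by blast
  obtain B where B: "B \<subseteq> A" "card B = k" using obtain_subset_with_card_n[OF assms(2)] by metis
  have finB: "finite B" using B finA finite_subset by blast
  define ys where "ys = sorted_list_of_set B @ sorted_list_of_set ({..<N} - B)"
  have "distinct ys" unfolding ys_def using finB by auto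
  moreover have "set ys = {..<N}" unfolding ys_def using finB B assms(1) by auto
  ultimately have "mset ys = mset [0..<N]"
    using set_eq_iff_mset_eq_distinct[of ys "[0..<N]"] by (simp add: lessThan_atLeast0)
  then obtain p where p: "p permutes {..<length [0..<N]}" "permute_list p [0..<N] = ys"
    by (rule mset_eq_permutation)
  have pN: "p permutes {..<N}" using p by simp
  have kN: "k \<le> N" using card_mono[OF _ assms(1)] assms(2) by simp
  have "p i \<in> A" if "i < k" for i
  proof -
    have iN: "i < N" using that kN by simp
    have "ys ! i = [0..<N] ! p i" using permute_list_nth[of p "[0..<N]" i] iN pN p(2) by simp
    also have "\<dots> = p i" using permutes_in_image[OF pN, of i] iN by simp
    finally have "p i = ys ! i" by simp
    also have "\<dots> = sorted_list_of_set B ! i" unfolding ys_def using that B finB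
      by (simp add: nth_append_left)
    also have "\<dots> \<in> B" using that B finB by (metis length_sorted_list_of_set nth_mem set_sorted_list_of_set)
    finally show ?thesis using B by blast
  qed
  then show ?thesis using that pN by blast
qed

lemma tpow_list: "length xs = k \<Longrightarrow> tpow \<theta> k xs = (\<Prod>i<k. \<theta> (xs!i))"
  unfolding tpow_def by (simp add: prod.list_conv_set_nth lessThan_atLeast0)

lemma perm_prod:
  assumes p: "\<pi> permutes {..<N}" and l: "length l = N" and r: "r \<le> N"
  shows "tpow \<theta> (N-r) (take (N-r) (permute_list \<pi> l)) * (\<Prod>j<r. h j (drop (N-r) (permute_list \<pi> l) ! j))
     = (\<Prod>i<N. (if i < N-r then \<theta> else h (i-(N-r))) (l ! \<pi> i))"
proof -
  have pl: "\<pi> permutes {..<length l}" using p l by simp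
  have nth: "permute_list \<pi> l ! i = l ! \<pi> i" if "i < N" for i
    using permute_list_nth[OF pl] that l by simp
  have "tpow \<theta> (N-r) (take (N-r) (permute_list \<pi> l)) = (\<Prod>i<N-r. \<theta> (take (N-r) (permute_list \<pi> l) ! i))"
    using l r by (intro tpow_list) simp
  also have "\<dots> = (\<Prod>i<N-r. \<theta> (l ! \<pi> i))"
    by (rule prod.cong) (auto simp: nth)
  finally have 1: "tpow \<theta> (N-r) (take (N-r) (permute_list \<pi> l)) = (\<Prod>i<N-r. \<theta> (l ! \<pi> i))" .
  have 2: "(\<Prod>j<r. h j (drop (N-r) (permute_list \<pi> l) ! j)) = (\<Prod>j<r. h j (l ! \<pi> (N-r+j)))"
    by (rule prod.cong) (use l r in \<open>auto simp: nth\<close>)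
  let ?g = "\<lambda>i. (if i < N-r then \<theta> else h (i-(N-r))) (l ! \<pi> i)"
  have "(\<Prod>i\<in>{0..<N-r}. ?g i) * (\<Prod>i\<in>{N-r..<N}. ?g i) = (\<Prod>i\<in>{0..<N}. ?g i)"
    by (rule prod.atLeastLessThan_concat) (use r in auto)
  then have "(\<Prod>i<N. ?g i) = (\<Prod>i\<in>{0..<N-r}. ?g i) * (\<Prod>i\<in>{N-r..<N}. ?g i)"
    by (simp add: lessThan_atLeast0)
  also have "(\<Prod>i\<in>{0..<N-r}. ?g i) = (\<Prod>i<N-r. \<theta> (l ! \<pi> i))"
    by (simp add: lessThan_atLeast0)
  also have "(\<Prod>i\<in>{N-r..<N}. ?g i) = (\<Prod>j<r. h j (l ! \<pi> (N-r+j)))"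
    using r by (simp add: prod.atLeastLessThan_shift_0[of _ "N-r" N] lessThan_atLeast0)
  finally show ?thesis using 1 2 by simp
qed

lemma vset_len:
  assumes "length l \<noteq> N" "tvec d r \<psi>" "r \<le> N"
  shows "tperm \<pi> (tprod (N - r) (tpow \<theta> (N - r)) \<psi>) l = 0"
proof (cases "length l \<ge> N - r")
  case True
  then have "length (drop (N-r) (permute_list \<pi> l)) \<noteq> r" using assms by auto
  then have "\<psi> (drop (N-r) (permute_list \<pi> l)) = 0" using assms(2) unfolding tvec_def tuples_def by auto
  then show ?thesis unfolding tperm_def tprod_def by simp
next
  case False
  then show ?thesis unfolding tperm_def tprod_def tpow_def by auto
qed

lemma good_zero:
  assumes "hvec d \<theta>" "good d N r \<theta> f" "i < N" "x \<ge> d"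
  shows "f i x = 0"
  using assms unfolding good_def hvec_def dl_def by force

lemma prodfun_in_Vset:
  assumes h: "hvec d \<theta>" and r: "r \<le> N" and g: "good d N r \<theta> f"
  shows "prodfun N f \<in> Vset d N r \<theta>"
proof -
  have "{i. i < N \<and> f i = \<theta>} \<subseteq> {..<N}" by auto
  then obtain \<pi> where p: "\<pi> permutes {..<N}" and pth: "\<forall>i<N-r. \<pi> i \<in> {i. i < N \<and> f i = \<theta>}"
    using perm_exists[of _ N "N-r"] g unfolding good_def by blast
  define \<psi> where "\<psi> l = (if length l = r then \<Prod>j<r. f (\<pi> (N-r+j)) (l!j) else 0)" for l
  have tv: "tvec d r \<psi>" unfolding tvec_def
  proof (intro allI impI)
    fix l assume "l \<notin> tuples d r"
    show "\<psi> l = 0"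
    proof (cases "length l = r")
      case True
      with \<open>l \<notin> tuples d r\<close> have "\<not> set l \<subseteq> {..<d}" unfolding tuples_def by auto
      then obtain x where "x \<in> set l" "x \<ge> d" by (meson lessThan_iff not_le subsetI)
      then obtain j where j: "j < r" "l ! j \<ge> d" using True by (metis in_set_conv_nth)
      have "\<pi> (N-r+j) < N" using permutes_in_image[OF p, of "N-r+j"] j r by simp
      then have "f (\<pi> (N-r+j)) (l!j) = 0" using good_zero[OF h g] j by blast
      then show ?thesis unfolding \<psi>_def using True j by (auto intro: prod_zero)
    qed (simp add: \<psi>_def)
  qed
  have "prodfun N f = tperm \<pi> (tprod (N - r) (tpow \<theta> (N - r)) \<psi>)"
  proof
    fix l
    show "prodfun N f l = tperm \<pi> (tprod (N - r) (tpow \<theta> (N - r)) \<psi>) l"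
    proof (cases "length l = N")
      case True
      have "tperm \<pi> (tprod (N - r) (tpow \<theta> (N - r)) \<psi>) l
         = tpow \<theta> (N-r) (take (N-r) (permute_list \<pi> l)) * (\<Prod>j<r. f (\<pi> (N-r+j)) (drop (N-r) (permute_list \<pi> l) ! j))"
        unfolding tperm_def tprod_def \<psi>_def using True r by simp
      also have "\<dots> = (\<Prod>i<N. (if i < N-r then \<theta> else (\<lambda>j. f (\<pi> (N-r+j))) (i-(N-r))) (l ! \<pi> i))"
        by (rule perm_prod[OF p True r])
      also have "\<dots> = (\<Prod>i<N. f (\<pi> i) (l ! \<pi> i))"
        by (rule prod.cong) (use pth r in auto)
      also have "\<dots> = (\<Prod>i<N. f i (l ! i))"
        using prod.permute[OF p, of "\<lambda>i. f i (l ! i)"] by (simp add: comp_def)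
      finally show ?thesis unfolding prodfun_def using True by simp
    next
      case False
      then show ?thesis using vset_len[OF False tv r] unfolding prodfun_def by simp
    qed
  qed
  then show ?thesis unfolding Vset_def using p tv by blast
qed

lemma finite_tuples: "finite (tuples d r)"
proof -
  have "tuples d r = {xs. set xs \<subseteq> {..<d} \<and> length xs = r}" unfolding tuples_def by auto
  then show ?thesis using finite_lists_length_eq[of "{..<d}" r] by simp
qed

lemma Vset_in_span:
  assumes r: "r \<le> N" and v: "v \<in> Vset d N r \<theta>"
  shows "v \<in> cspan {prodfun N f | f. good d N r \<theta> f}"
proof -
  obtain \<pi> \<psi> where vdef: "v = tperm \<pi> (tprod (N - r) (tpow \<theta> (N - r)) \<psi>)"
    and p: "\<pi> permutes {..<N}" and tv: "tvec d r \<psi>"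
    using v unfolding Vset_def by blast
  define G where "G ys i = (if i < N-r then \<theta> else dl (ys!(i-(N-r))))" for ys i
  have pinv: "inv \<pi> permutes {..<N}" using permutes_inv[OF p] .
  have good: "good d N r \<theta> (\<lambda>i. G ys (inv \<pi> i))" if ys: "ys \<in> tuples d r" for ys
  proof -
    have A: "G ys (inv \<pi> i) = \<theta> \<or> (\<exists>a<d. G ys (inv \<pi> i) = dl a)" if "i < N" for i
    proof (cases "inv \<pi> i < N - r")
      case False
      have "inv \<pi> i < N" using permutes_in_image[OF pinv] that by simp
      then have "inv \<pi> i - (N-r) < length ys" using False ys r unfolding tuples_def by auto
      then have "ys ! (inv \<pi> i - (N-r)) < d" using ys unfolding tuples_def by (auto dest: nth_mem)
      then show ?thesis using False unfolding G_def by auto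
    qed (simp add: G_def)
    have sub: "\<pi> ` {..<N-r} \<subseteq> {i. i < N \<and> G ys (inv \<pi> i) = \<theta>}"
      using permutes_inverses(2)[OF p] permutes_in_image[OF p] by (auto simp: G_def)
    have "card (\<pi> ` {..<N-r}) = N - r"
      using card_image[OF inj_on_subset[OF permutes_inj[OF p]]] by simp
    then have "N - r \<le> card {i. i < N \<and> G ys (inv \<pi> i) = \<theta>}"
      using card_mono[OF _ sub] by simp
    then show ?thesis using A unfolding good_def by blast
  qed
  have eq: "v = (\<lambda>l. \<Sum>ys\<in>tuples d r. \<psi> ys * prodfun N (\<lambda>i. G ys (inv \<pi> i)) l)"
  proof
    fix l
    show "v l = (\<Sum>ys\<in>tuples d r. \<psi> ys * prodfun N (\<lambda>i. G ys (inv \<pi> i)) l)"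
    proof (cases "length l = N")
      case True
      define w where "w = drop (N-r) (permute_list \<pi> l)"
      have lw: "length w = r" unfolding w_def using True r by simp
      have ind: "(\<Prod>j<r. dl (ys!j) (w!j)) = (if ys = w then 1 else 0)" if "ys \<in> tuples d r" for ys
      proof (cases "ys = w")
        case False
        have ly: "length ys = r" using that unfolding tuples_def by simp
        then obtain j where "j < r" "ys ! j \<noteq> w ! j" using False lw by (metis nth_equalityI)
        then show ?thesis using False by (auto simp: dl_def intro!: prod_zero bexI[of _ j])
      qed (simp add: dl_def)
      have "\<psi> w = (\<Sum>ys\<in>tuples d r. if w = ys then \<psi> ys else 0)"
        using tv unfolding tvec_def by (cases "w \<in> tuples d r") (simp_all add: sum.delta[OF finite_tuples] sum.delta'[OF finite_tuples])
      also have "\<dots> = (\<Sum>ys\<in>tuples d r. \<psi> ys * (\<Prod>j<r. dl (ys!j) (w!j)))"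
        by (rule sum.cong) (auto simp: ind)
      finally have psiw: "\<psi> w = \<dots>" .
      have "v l = tpow \<theta> (N-r) (take (N-r) (permute_list \<pi> l)) * \<psi> w"
        unfolding vdef tperm_def tprod_def w_def by simp
      also have "\<dots> = (\<Sum>ys\<in>tuples d r. \<psi> ys * (tpow \<theta> (N-r) (take (N-r) (permute_list \<pi> l)) * (\<Prod>j<r. dl (ys!j) (w!j))))"
        unfolding psiw sum_distrib_left by (simp add: ac_simps)
      also have "\<dots> = (\<Sum>ys\<in>tuples d r. \<psi> ys * prodfun N (\<lambda>i. G ys (inv \<pi> i)) l)"
      proof (rule sum.cong[OF refl])
        fix ys
        have "tpow \<theta> (N-r) (take (N-r) (permute_list \<pi> l)) * (\<Prod>j<r. dl (ys!j) (w!j))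
            = (\<Prod>i<N. (if i < N-r then \<theta> else (\<lambda>j. dl (ys!j)) (i-(N-r))) (l ! \<pi> i))"
          unfolding w_def by (rule perm_prod[OF p True r])
        also have "\<dots> = (\<Prod>i<N. G ys i (l ! \<pi> i))" by (simp add: G_def)
        also have "\<dots> = (\<Prod>i<N. G ys (inv \<pi> i) (l ! i))"
          using prod.permute[OF pinv, of "\<lambda>i. G ys i (l ! \<pi> i)"]
          by (simp add: comp_def permutes_inverses(1)[OF p])
        finally show "\<psi> ys * (tpow \<theta> (N-r) (take (N-r) (permute_list \<pi> l)) * (\<Prod>j<r. dl (ys!j) (w!j)))
          = \<psi> ys * prodfun N (\<lambda>i. G ys (inv \<pi> i)) l"
          unfolding prodfun_def using True by simp
      qed
      finally show ?thesis .
    next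
      case False
      then show ?thesis using vset_len[OF False tv r] unfolding vdef prodfun_def by simp
    qed
  qed
  show ?thesis unfolding eq
    by (rule cspan_sum[OF finite_tuples]) (use good in \<open>auto intro: cspan_base\<close>)
qed

lemma restrict_P:
  assumes h: "hvec d \<theta>" and g: "good d N r \<theta> f" and rm: "r + m \<le> N" and zs: "length zs = m"
  shows "(\<lambda>xs. prodfun N f (xs @ zs)) \<in> cspan (Vset d (N-m) r \<theta>)"
proof -
  have "prodfun (N-m) f \<in> Vset d (N-m) r \<theta>"
    by (rule prodfun_in_Vset[OF h]) (use rm good_restrict[OF g] in auto)
  then have "(\<lambda>xs. (\<Prod>j<m. f (N-m+j) (zs!j)) * prodfun (N-m) f xs) \<in> cspan (Vset d (N-m) r \<theta>)"
    by (intro cspan_smult cspan_base)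
  then show ?thesis using prodfun_append[OF zs, of N f] rm by simp
qed

lemma restrict_span:
  assumes h: "hvec d \<theta>" and rm: "r + m \<le> N" and zs: "length zs = m"
    and v: "v \<in> cspan (Vset d N r \<theta>)"
  shows "(\<lambda>xs. v (xs @ zs)) \<in> cspan (Vset d (N-m) r \<theta>)"
proof (rule cspan_restrict[OF _ v], rule ballI)
  fix u assume u: "u \<in> Vset d N r \<theta>"
  show "(\<lambda>xs. u (xs @ zs)) \<in> cspan (Vset d (N-m) r \<theta>)"
    by (rule cspan_restrict[OF _ Vset_in_span[OF _ u]]) (use restrict_P[OF h _ rm zs] rm in auto)
qed

lemma rank_bij:
  fixes S :: "nat set"
  assumes "finite S"
  shows "bij_betw (\<lambda>i. card {j\<in>S. j < i}) S {..<card S}"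
proof -
  let ?f = "\<lambda>i. card {j\<in>S. j < i}"
  have lt: "?f i < ?f i'" if "i \<in> S" "i' \<in> S" "i < i'" for i i'
  proof (rule psubset_card_mono)
    show "finite {j\<in>S. j < i'}" using assms by simp
    have "i \<in> {j\<in>S. j < i'}" "i \<notin> {j\<in>S. j < i}" using that by auto
    then show "{j\<in>S. j < i} \<subset> {j\<in>S. j < i'}" using that by (auto intro!: psubsetI)
  qed
  have inj: "inj_on ?f S"
  proof (rule inj_onI)
    fix i i' assume a: "i \<in> S" "i' \<in> S" "?f i = ?f i'"
    show "i = i'"
    proof (rule ccontr)
      assume "i \<noteq> i'"
      then have "i < i' \<or> i' < i" by (rule nat_neq_iff[THEN iffD1])
      then show False using lt[OF a(1,2)] lt[OF a(2,1)] a(3) by auto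
    qed
  qed
  have sub: "?f ` S \<subseteq> {..<card S}"
  proof
    fix y assume "y \<in> ?f ` S"
    then obtain i where i: "i \<in> S" "y = ?f i" by blast
    have "{j\<in>S. j < i} \<subset> S" using i by auto
    then have "?f i < card S" by (rule psubset_card_mono[OF assms])
    then show "y \<in> {..<card S}" using i by simp
  qed
  have "card (?f ` S) = card {..<card S}" using card_image[OF inj] by simp
  then have "?f ` S = {..<card S}" using card_subset_eq[OF _ sub] by simp
  then show ?thesis using inj unfolding bij_betw_def by simp
qed

lemma image_rank:
  fixes S :: "nat set"
  assumes "finite S" "length ys = card S"
  shows "image_mset (\<lambda>i. ys ! card {j\<in>S. j < i}) (mset_set S) = mset ys"
proof -
  let ?f = "\<lambda>i. card {j\<in>S. j < i}"
  have b: "bij_betw ?f S {..<card S}" by (rule rank_bij[OF assms(1)])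
  have "image_mset (\<lambda>i. ys ! ?f i) (mset_set S) = image_mset (nth ys) (image_mset ?f (mset_set S))"
    by (simp add: multiset.map_comp comp_def)
  also have "image_mset ?f (mset_set S) = mset_set {..<card S}"
    using b unfolding bij_betw_def by (simp add: image_mset_mset_set)
  also have "image_mset (nth ys) (mset_set {..<card S}) = mset (map (nth ys) [0..<card S])"
    by (simp add: mset_upt lessThan_atLeast0)
  also have "map (nth ys) [0..<card S] = ys" using assms(2) by (metis map_nth)
  finally show ?thesis .
qed

lemma mset_merge:
  assumes T: "T \<subseteq> {..<n}" "card T = m" and xs: "length xs = n - m" and zs: "length zs = m"
  shows "mset (merge n T xs zs) = mset xs + mset zs"
proof -
  define h where "h i = (if i \<in> T then zs ! card {j\<in>T. j < i} else xs ! card {j\<in>{..<n} - T. j < i})" for i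
  have finT: "finite T" using T finite_subset by blast
  have cC: "card ({..<n} - T) = n - m" using T finT by (simp add: card_Diff_subset)
  have "mset (merge n T xs zs) = image_mset h (mset_set {..<n})"
    unfolding merge_def h_def by (simp add: mset_upt lessThan_atLeast0)
  also have "{..<n} = T \<union> ({..<n} - T)" using T by auto
  also have "mset_set (T \<union> ({..<n} - T)) = mset_set T + mset_set ({..<n} - T)"
    by (rule mset_set_Union) (use finT in auto)
  also have "image_mset h (mset_set T + mset_set ({..<n} - T))
      = image_mset h (mset_set T) + image_mset h (mset_set ({..<n} - T))" by simp
  also have "image_mset h (mset_set T) = image_mset (\<lambda>i. zs ! card {j\<in>T. j < i}) (mset_set T)"
    by (rule image_mset_cong) (use finT in \<open>simp add: h_def\<close>)
  also have "\<dots> = mset zs" by (rule image_rank) (use finT T zs in auto)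
  also have "image_mset h (mset_set ({..<n} - T)) = image_mset (\<lambda>i. xs ! card {j\<in>{..<n} - T. j < i}) (mset_set ({..<n} - T))"
    by (rule image_mset_cong) (simp add: h_def)
  also have "\<dots> = mset xs" by (rule image_rank) (use cC xs in auto)
  finally show ?thesis by (simp add: add.commute)
qed

lemma merge_sym:
  assumes phi: "\<phi> \<in> sym_space d n" and T: "T \<subseteq> {..<n}" "card T = m"
    and xs: "length xs = n - m" and zs: "length zs = m"
  shows "\<phi> (merge n T xs zs) = \<phi> (xs @ zs)"
proof -
  have mn: "m \<le> n" using card_mono[OF _ T(1)] T(2) by simp
  obtain p where p: "p permutes {..<length (xs @ zs)}" "permute_list p (xs @ zs) = merge n T xs zs"
    using mset_eq_permutation[of "merge n T xs zs" "xs @ zs"] mset_merge[OF T xs zs] by auto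
  have "p permutes {..<n}" using p(1) xs zs mn by simp
  then have "tperm p \<phi> = \<phi>" using phi unfolding sym_space_def by blast
  then have "\<phi> (permute_list p (xs @ zs)) = \<phi> (xs @ zs)" unfolding tperm_def by metis
  then show ?thesis using p(2) by simp
qed

lemma sym_smult: "\<phi> \<in> sym_space d N \<Longrightarrow> (\<lambda>xs. a * \<phi> xs) \<in> sym_space d N"
  unfolding sym_space_def tvec_def tperm_def by (auto simp: fun_eq_iff)

lemma ap_smult: "\<phi> \<in> almost_power d N r \<theta> \<Longrightarrow> (\<lambda>xs. a * \<phi> xs) \<in> almost_power d N r \<theta>"
  unfolding almost_power_def using sym_smult cspan_smult by blast

lemma tnorm2_smult: "tnorm2 d N (\<lambda>xs. a * \<phi> xs) = (cmod a)\<^sup>2 * tnorm2 d N \<phi>"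
  unfolding tnorm2_def by (simp add: norm_mult power_mult_distrib sum_distrib_left)

lemma tnorm2_nonneg: "tnorm2 d N \<phi> \<ge> 0"
  unfolding tnorm2_def by (simp add: sum_nonneg)

lemma tnorm2_zero:
  assumes "tvec d N u" "tnorm2 d N u = 0"
  shows "u xs = 0"
proof (cases "xs \<in> tuples d N")
  case True
  have "\<forall>x\<in>tuples d N. (cmod (u x))\<^sup>2 = 0"
    using assms(2) sum_nonneg_eq_0_iff[OF finite_tuples, where f="\<lambda>x. (cmod (u x))\<^sup>2"]
    unfolding tnorm2_def by simp
  then show ?thesis using True by simp
next
  case False
  then show ?thesis using assms(1) unfolding tvec_def by simp
qed

lemma conv_intro:
  assumes I: "finite I" and w: "\<forall>i\<in>I. w i \<ge> 0" and u: "\<forall>i\<in>I. u i \<in> almost_power d N r \<theta>"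
    and s: "(\<Sum>i\<in>I. w i * tnorm2 d N (u i)) = 1"
  shows "(\<lambda>xs ys. \<Sum>i\<in>I. complex_of_real (w i) * proj (u i) xs ys) \<in> conv_almost_power d N r \<theta>"
proof -
  define t where "t i = tnorm2 d N (u i)" for i
  have t0: "t i \<ge> 0" for i unfolding t_def by (rule tnorm2_nonneg)
  define I' where "I' = {i\<in>I. t i \<noteq> 0}"
  define v where "v i = (\<lambda>xs. complex_of_real (1 / sqrt (t i)) * u i xs)" for i
  have finI': "finite I'" unfolding I'_def using I by simp
  have vs: "v i \<in> almost_power_states d N r \<theta>" if "i \<in> I'" for i
  proof -
    have tp: "t i > 0" using that t0[of i] unfolding I'_def by auto
    have "v i \<in> almost_power d N r \<theta>" unfolding v_def using u that ap_smult unfolding I'_def by blast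
    moreover have "tnorm2 d N (v i) = 1" unfolding v_def tnorm2_smult
      using tp by (simp add: t_def[symmetric] power_divide norm_divide)
    ultimately show ?thesis unfolding almost_power_states_def by blast
  qed
  have projv: "proj (u i) xs ys = complex_of_real (t i) * proj (v i) xs ys" if "i \<in> I'" for i xs ys
  proof -
    have tp: "t i > 0" using that t0[of i] unfolding I'_def by auto
    have "complex_of_real (t i) * (complex_of_real (1 / sqrt (t i)) * complex_of_real (1 / sqrt (t i))) = 1"
      using tp by (simp flip: of_real_mult)
    then show ?thesis unfolding proj_def v_def
      by (simp add: ac_simps)
  qed
  have proj0: "proj (u i) xs ys = 0" if "i \<in> I" "i \<notin> I'" for i xs ys
  proof -
    have "tvec d N (u i)" using u that unfolding almost_power_def sym_space_def by blast
    then have "u i xs = 0" using tnorm2_zero[of d N "u i" xs] that unfolding I'_def t_def by auto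
    then show ?thesis unfolding proj_def by simp
  qed
  define F' where "F' = v ` I'"
  define p' where "p' \<psi> = (\<Sum>i\<in>{i\<in>I'. v i = \<psi>}. w i * t i)" for \<psi>
  have "finite F'" unfolding F'_def using finI' by simp
  moreover have "F' \<subseteq> almost_power_states d N r \<theta>" unfolding F'_def using vs by blast
  moreover have "\<forall>\<phi>\<in>F'. p' \<phi> \<ge> 0" unfolding p'_def using w t0 unfolding I'_def
    by (auto intro!: sum_nonneg)
  moreover have "sum p' F' = 1"
  proof -
    have "sum p' F' = (\<Sum>i\<in>I'. w i * t i)"
      unfolding p'_def F'_def by (rule sum.image_gen[OF finI', symmetric])
    also have "\<dots> = (\<Sum>i\<in>I. w i * t i)"
      by (rule sum.mono_neutral_left) (use I in \<open>auto simp: I'_def\<close>)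
    finally show ?thesis using s unfolding t_def by simp
  qed
  moreover have "(\<lambda>xs ys. \<Sum>i\<in>I. complex_of_real (w i) * proj (u i) xs ys)
      = (\<lambda>xs ys. \<Sum>\<phi>\<in>F'. complex_of_real (p' \<phi>) * proj \<phi> xs ys)"
  proof (intro ext)
    fix xs ys
    have "(\<Sum>i\<in>I. complex_of_real (w i) * proj (u i) xs ys) = (\<Sum>i\<in>I'. complex_of_real (w i) * proj (u i) xs ys)"
      by (rule sum.mono_neutral_right) (use I proj0 in \<open>auto simp: I'_def\<close>)
    also have "\<dots> = (\<Sum>i\<in>I'. complex_of_real (w i * t i) * proj (v i) xs ys)"
      by (rule sum.cong) (auto simp: projv)
    also have "\<dots> = (\<Sum>\<psi>\<in>F'. \<Sum>i\<in>{i\<in>I'. v i = \<psi>}. complex_of_real (w i * t i) * proj (v i) xs ys)"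
      unfolding F'_def by (rule sum.image_gen[OF finI'])
    also have "\<dots> = (\<Sum>\<psi>\<in>F'. \<Sum>i\<in>{i\<in>I'. v i = \<psi>}. complex_of_real (w i * t i) * proj \<psi> xs ys)"
      by (rule sum.cong[OF refl], rule sum.cong) auto
    also have "\<dots> = (\<Sum>\<psi>\<in>F'. complex_of_real (p' \<psi>) * proj \<psi> xs ys)"
      unfolding p'_def by (simp add: sum_distrib_right)
    finally show "(\<Sum>i\<in>I. complex_of_real (w i) * proj (u i) xs ys) = (\<Sum>\<phi>\<in>F'. complex_of_real (p' \<phi>) * proj \<phi> xs ys)" .
  qed
  ultimately show ?thesis unfolding conv_almost_power_def by blast
qed

lemma app_tuples:
  assumes "zs \<in> tuples d m"
  shows "(xs @ zs \<in> tuples d (k + m)) \<longleftrightarrow> xs \<in> tuples d k"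
  using assms unfolding tuples_def by auto

lemma permute_list_append:
  assumes "\<sigma> permutes {..<length xs}"
  shows "permute_list \<sigma> (xs @ zs) = permute_list \<sigma> xs @ zs"
proof (rule nth_equalityI)
  show "length (permute_list \<sigma> (xs @ zs)) = length (permute_list \<sigma> xs @ zs)" by simp
  fix i assume "i < length (permute_list \<sigma> (xs @ zs))"
  then have i: "i < length xs + length zs" by simp
  show "permute_list \<sigma> (xs @ zs) ! i = (permute_list \<sigma> xs @ zs) ! i"
  proof (cases "i < length xs")
    case True
    have "\<sigma> i < length xs" using permutes_in_image[OF assms] True by simp
    then show ?thesis using True i assms
      by (simp add: permute_list_def nth_append_left)
  next
    case False
    have "\<sigma> i = i" using permutes_not_in[OF assms] False by simp
    then show ?thesis using False i by (simp add: permute_list_def nth_append)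
  qed
qed

lemma tuples_bij:
  assumes "m \<le> n"
  shows "bij_betw (\<lambda>(xs, zs). xs @ zs) (tuples d (n-m) \<times> tuples d m) (tuples d n)"
proof -
  have "inj_on (\<lambda>(xs, zs). xs @ zs) (tuples d (n-m) \<times> tuples d m)"
    unfolding inj_on_def tuples_def by (clarsimp simp: append_eq_append_conv)
  moreover have "(\<lambda>(xs, zs). xs @ zs) ` (tuples d (n-m) \<times> tuples d m) = tuples d n"
  proof
    show "(\<lambda>(xs, zs). xs @ zs) ` (tuples d (n-m) \<times> tuples d m) \<subseteq> tuples d n"
      using assms by (auto simp: tuples_def)
    show "tuples d n \<subseteq> (\<lambda>(xs, zs). xs @ zs) ` (tuples d (n-m) \<times> tuples d m)"
    proof
      fix l assume l: "l \<in> tuples d n"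
      have "take (n-m) l \<in> tuples d (n-m)" "drop (n-m) l \<in> tuples d m"
        using l assms by (auto simp: tuples_def dest: in_set_takeD in_set_dropD)
      then show "l \<in> (\<lambda>(xs, zs). xs @ zs) ` (tuples d (n-m) \<times> tuples d m)"
        by (intro image_eqI[of _ _ "(take (n-m) l, drop (n-m) l)"]) auto
    qed
  qed
  ultimately show ?thesis unfolding bij_betw_def by blast
qed

lemma tnorm2_split:
  assumes "m \<le> n"
  shows "tnorm2 d n \<phi> = (\<Sum>zs\<in>tuples d m. tnorm2 d (n-m) (\<lambda>xs. \<phi> (xs @ zs)))"
proof -
  have "tnorm2 d n \<phi> = (\<Sum>p\<in>tuples d (n-m) \<times> tuples d m. (cmod (\<phi> ((\<lambda>(xs, zs). xs @ zs) p)))\<^sup>2)"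
    unfolding tnorm2_def using sum.reindex_bij_betw[OF tuples_bij[OF assms], of "\<lambda>l. (cmod (\<phi> l))\<^sup>2"]
    by simp
  also have "\<dots> = (\<Sum>xs\<in>tuples d (n-m). \<Sum>zs\<in>tuples d m. (cmod (\<phi> (xs @ zs)))\<^sup>2)"
    by (simp add: sum.cartesian_product split_def)
  also have "\<dots> = (\<Sum>zs\<in>tuples d m. \<Sum>xs\<in>tuples d (n-m). (cmod (\<phi> (xs @ zs)))\<^sup>2)"
    by (rule sum.swap)
  finally show ?thesis unfolding tnorm2_def .
qed

theorem lemma1:
  fixes d n m r :: nat and \<theta> :: "nat \<Rightarrow> complex"
    and \<rho> :: "nat list \<Rightarrow> nat list \<Rightarrow> complex" and T :: "nat set"
  assumes "hvec d \<theta>" and "hnorm2 d \<theta> = 1"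
    and "r + m \<le> n"
    and "\<rho> \<in> conv_almost_power d n r \<theta>"
    and "T \<subseteq> {..<n}" and "card T = m"
  shows "ptrace d n T \<rho> \<in> conv_almost_power d (n - m) r \<theta>"
proof -
  note h = assms(1) and rm = assms(3) and T = assms(5,6)
  obtain F p where F: "finite F" "F \<subseteq> almost_power_states d n r \<theta>" "\<forall>\<phi>\<in>F. p \<phi> \<ge> (0::real)"
    "sum p F = 1" "\<rho> = (\<lambda>xs ys. \<Sum>\<phi>\<in>F. complex_of_real (p \<phi>) * proj \<phi> xs ys)"
    using assms(4) unfolding conv_almost_power_def by blast
  have mn: "m \<le> n" using rm by simp
  have Fsym: "\<phi> \<in> sym_space d n" if "\<phi> \<in> F" for \<phi>
    using F(2) that unfolding almost_power_states_def almost_power_def by blast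
  have Fspan: "\<phi> \<in> cspan (Vset d n r \<theta>)" if "\<phi> \<in> F" for \<phi>
    using F(2) that unfolding almost_power_states_def almost_power_def by blast
  have Fnorm: "tnorm2 d n \<phi> = 1" if "\<phi> \<in> F" for \<phi>
    using F(2) that unfolding almost_power_states_def by blast
  have Ftv: "\<phi> xs = 0" if "\<phi> \<in> F" "xs \<notin> tuples d n" for \<phi> xs
    using Fsym[OF that(1)] that(2) unfolding sym_space_def tvec_def by blast
  have nm: "n - m + m = n" using mn by simp
  have notup: "\<phi> (xs @ zs) = 0" if "\<phi> \<in> F" "zs \<in> tuples d m" "xs \<notin> tuples d (n - m)" for \<phi> xs zs
    using Ftv[OF that(1)] app_tuples[OF that(2), of xs "n-m"] that(3) nm by auto
  define I where "I = F \<times> tuples d m"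
  define w where "w = (\<lambda>(\<phi>::nat list \<Rightarrow> complex, zs::nat list). p \<phi>)"
  define u where "u = (\<lambda>(\<phi>::nat list \<Rightarrow> complex, zs::nat list). (\<lambda>xs. \<phi> (xs @ zs)))"
  have finI: "finite I" unfolding I_def using F(1) finite_tuples by simp
  have wI: "\<forall>i\<in>I. w i \<ge> 0" unfolding I_def w_def using F(3) by auto
  have uI: "\<forall>i\<in>I. u i \<in> almost_power d (n-m) r \<theta>"
  proof
    fix i assume "i \<in> I"
    then obtain \<phi> zs where i: "i = (\<phi>, zs)" "\<phi> \<in> F" "zs \<in> tuples d m" unfolding I_def by blast
    have lz: "length zs = m" using i(3) unfolding tuples_def by simp
    have tv: "tvec d (n-m) (\<lambda>xs. \<phi> (xs @ zs))" unfolding tvec_def using notup[OF i(2,3)] by blast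
    have perm: "tperm \<sigma> (\<lambda>xs. \<phi> (xs @ zs)) = (\<lambda>xs. \<phi> (xs @ zs))" if s: "\<sigma> permutes {..<n-m}" for \<sigma>
    proof
      fix xs
      show "tperm \<sigma> (\<lambda>xs. \<phi> (xs @ zs)) xs = \<phi> (xs @ zs)"
      proof (cases "length xs = n - m")
        case True
        have "permute_list \<sigma> xs @ zs = permute_list \<sigma> (xs @ zs)"
          using permute_list_append[of \<sigma> xs zs] s True by simp
        moreover have "\<sigma> permutes {..<n}" using permutes_subset[OF s] by auto
        then have "tperm \<sigma> \<phi> = \<phi>" using Fsym[OF i(2)] unfolding sym_space_def by blast
        ultimately show ?thesis unfolding tperm_def by (metis True length_append lz nm)
      next
        case False
        then have "permute_list \<sigma> xs \<notin> tuples d (n-m)" "xs \<notin> tuples d (n-m)" unfolding tuples_def by auto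
        then show ?thesis unfolding tperm_def using notup[OF i(2,3)] by simp
      qed
    qed
    have "(\<lambda>xs. \<phi> (xs @ zs)) \<in> cspan (Vset d (n-m) r \<theta>)"
      by (rule restrict_span[OF h rm lz Fspan[OF i(2)]])
    then show "u i \<in> almost_power d (n-m) r \<theta>"
      unfolding almost_power_def sym_space_def u_def i(1) using tv perm by auto
  qed
  have sI: "(\<Sum>i\<in>I. w i * tnorm2 d (n-m) (u i)) = 1"
  proof -
    have "(\<Sum>i\<in>I. w i * tnorm2 d (n-m) (u i)) = (\<Sum>\<phi>\<in>F. \<Sum>zs\<in>tuples d m. p \<phi> * tnorm2 d (n-m) (\<lambda>xs. \<phi> (xs @ zs)))"
      unfolding I_def w_def u_def by (simp add: sum.cartesian_product split_def)
    also have "\<dots> = (\<Sum>\<phi>\<in>F. p \<phi> * tnorm2 d n \<phi>)"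
      by (rule sum.cong[OF refl]) (simp add: tnorm2_split[OF mn] sum_distrib_left)
    also have "\<dots> = (\<Sum>\<phi>\<in>F. p \<phi>)" by (rule sum.cong) (auto simp: Fnorm)
    finally show ?thesis using F(4) by simp
  qed
  have eq: "ptrace d n T \<rho> = (\<lambda>xs ys. \<Sum>i\<in>I. complex_of_real (w i) * proj (u i) xs ys)"
  proof (intro ext)
    fix xs ys
    show "ptrace d n T \<rho> xs ys = (\<Sum>i\<in>I. complex_of_real (w i) * proj (u i) xs ys)"
    proof (cases "xs \<in> tuples d (n - m) \<and> ys \<in> tuples d (n - m)")
      case True
      then have lx: "length xs = n - m" and ly: "length ys = n - m" unfolding tuples_def by auto
      have "ptrace d n T \<rho> xs ys = (\<Sum>zs\<in>tuples d m. \<Sum>\<phi>\<in>F. complex_of_real (p \<phi>) * proj \<phi> (merge n T xs zs) (merge n T ys zs))"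
        unfolding ptrace_def using True T(2) F(5) by simp
      also have "\<dots> = (\<Sum>zs\<in>tuples d m. \<Sum>\<phi>\<in>F. complex_of_real (p \<phi>) * proj \<phi> (xs @ zs) (ys @ zs))"
      proof (rule sum.cong[OF refl], rule sum.cong[OF refl])
        fix zs \<phi> assume zs: "zs \<in> tuples d m" and ph: "\<phi> \<in> F"
        have lz: "length zs = m" using zs unfolding tuples_def by simp
        show "complex_of_real (p \<phi>) * proj \<phi> (merge n T xs zs) (merge n T ys zs) = complex_of_real (p \<phi>) * proj \<phi> (xs @ zs) (ys @ zs)"
          unfolding proj_def using merge_sym[OF Fsym[OF ph] T lx lz] merge_sym[OF Fsym[OF ph] T ly lz] by simp
      qed
      also have "\<dots> = (\<Sum>\<phi>\<in>F. \<Sum>zs\<in>tuples d m. complex_of_real (p \<phi>) * proj \<phi> (xs @ zs) (ys @ zs))"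
        by (rule sum.swap)
      also have "\<dots> = (\<Sum>i\<in>I. complex_of_real (w i) * proj (u i) xs ys)"
        unfolding I_def w_def u_def proj_def by (simp add: sum.cartesian_product split_def)
      finally show ?thesis .
    next
      case False
      have "proj (u i) xs ys = 0" if "i \<in> I" for i
      proof -
        obtain \<phi> zs where i: "i = (\<phi>, zs)" "\<phi> \<in> F" "zs \<in> tuples d m" using \<open>i \<in> I\<close> unfolding I_def by blast
        show ?thesis using False notup[OF i(2,3)] unfolding proj_def u_def i(1) by auto
      qed
      moreover have "ptrace d n T \<rho> xs ys = 0" unfolding ptrace_def using False T(2) by auto
      ultimately show ?thesis by simp
    qed
  qed
  show ?thesis unfolding eq by (rule conv_intro[OF finI wI uI sI])
qed

end
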